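(* Let $\pi:(X,T)\to(Z,R)$ be a factor map between dynamical systems. (1) If $\pi$ is almost one-to-one and $(Z,R)$ is transitively sensitive (with some sensitive constant $\delta>0$), then $(X,T)$ is transitively sensitive. (2) If there exists $z\in Z$ with $\pi^{-1}(z)$ a singleton and $(X,T)$ is transitively sensitive, then $(Z,R)$ is sensitive; in particular $\mathrm{Eq}(Z,R)=\varnothing$.
   Context: A dynamical system $(X,T)$: $X$ is a compact metric space (metric $d$) with more than one point and without isolated points, $T:X\to X$ a continuous surjection. A factor map $\pi:(X,T)\to(Z,R)$ is a continuous surjection $\pi:X\to Z$ with $\pi\circ T=R\circ\pi$. $\pi$ is almost one-to-one if the set of $x\in X$ with $\pi^{-1}(\pi(x))=\{x\}$ is dense in $X$. "Opene" means open and nonempty. $S_T(U,\delta)=\{n\in\mathbb{Z}_+:\exists x_1,x_2\in U,\ d(T^nx_1,T^nx_2)>\delta\}$, $N_T(U,V)=\{n\in\mathbb{Z}_+:U\cap T^{-n}V\neq\varnothing\}$. $(X,T)$ is transitively sensitive (with sensitive constant $\delta$) if $S_T(W,\delta)\cap N_T(U,V)\neq\varnothing$ for all opene $U,V,W$. $(Z,R)$ is sensitive if there is $\delta>0$ such that for every $z\in Z$ and neighbourhood $U$ of $z$ there exist $y\in U$, $n\in\mathbb{N}$ with $\rho(R^nz,R^ny)>\delta$ ($\rho$ the metric of $Z$). $\mathrm{Eq}(Z,R)$ is the set of equicontinuity points: $z$ such that for every $\varepsilon>0$ there is $\eta>0$ with $\rho(z,z')<\eta\Rightarrow\rho(R^nz,R^nz')<\varepsilon$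 for all $n\in\mathbb{Z}_+$. *)

theory Defs
  imports "HOL-Analysis.Analysis"
begin

definition dynsys :: "'a::metric_space set \<Rightarrow> ('a \<Rightarrow> 'a) \<Rightarrow> bool" where
  "dynsys X T \<longleftrightarrow> compact X \<and> (\<exists>x\<in>X. \<exists>y\<in>X. x \<noteq> y) \<and>
     (\<forall>x\<in>X. x islimpt X) \<and> continuous_on X T \<and> T ` X = X"

definition factor_map ::
  "('a::metric_space \<Rightarrow> 'b::metric_space) \<Rightarrow> 'a set \<Rightarrow> ('a \<Rightarrow> 'a) \<Rightarrow> 'b set \<Rightarrow> ('b \<Rightarrow> 'b) \<Rightarrow> bool" where
  "factor_map \<pi> X T Z R \<longleftrightarrow> continuous_on X \<pi> \<and> \<pi> ` X = Z \<and> (\<forall>x\<in>X. \<pi> (T x) = R (\<pi> x))"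

definition almost_one_to_one :: "('a::metric_space \<Rightarrow> 'b) \<Rightarrow> 'a set \<Rightarrow> bool" where
  "almost_one_to_one \<pi> X \<longleftrightarrow> X \<subseteq> closure {x \<in> X. \<pi> -` {\<pi> x} \<inter> X = {x}}"

definition opene :: "'a::topological_space set \<Rightarrow> 'a set \<Rightarrow> bool" where
  "opene X U \<longleftrightarrow> openin (top_of_set X) U \<and> U \<noteq> {}"

definition S_T :: "('a::metric_space \<Rightarrow> 'a) \<Rightarrow> 'a set \<Rightarrow> real \<Rightarrow> nat set" where
  "S_T T U \<delta> = {n. \<exists>x1\<in>U. \<exists>x2\<in>U. dist ((T^^n) x1) ((T^^n) x2) > \<delta>}"

definition N_T :: "('a \<Rightarrow> 'a) \<Rightarrow> 'a set \<Rightarrow> 'a set \<Rightarrow> nat set" where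
  "N_T T U V = {n. U \<inter> (T^^n) -` V \<noteq> {}}"

definition trans_sensitive_const :: "'a::metric_space set \<Rightarrow> ('a \<Rightarrow> 'a) \<Rightarrow> real \<Rightarrow> bool" where
  "trans_sensitive_const X T \<delta> \<longleftrightarrow>
     (\<forall>U V W. opene X U \<longrightarrow> opene X V \<longrightarrow> opene X W \<longrightarrow> S_T T W \<delta> \<inter> N_T T U V \<noteq> {})"

definition trans_sensitive :: "'a::metric_space set \<Rightarrow> ('a \<Rightarrow> 'a) \<Rightarrow> bool" where
  "trans_sensitive X T \<longleftrightarrow> (\<exists>\<delta>>0. trans_sensitive_const X T \<delta>)"

definition sensitive :: "'b::metric_space set \<Rightarrow> ('b \<Rightarrow> 'b) \<Rightarrow> bool" where
  "sensitive Z R \<longleftrightarrow> (\<exists>\<delta>>0. \<forall>z\<in>Z. \<forall>U. (\<exists>V. openin (top_of_set Z) V \<and> z \<in> V \<and> V \<subseteq> U) \<and> U \<subseteq> Z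
      \<longrightarrow> (\<exists>y\<in>U. \<exists>n::nat. n \<ge> 1 \<and> dist ((R^^n) z) ((R^^n) y) > \<delta>))"

definition Eq_points :: "'b::metric_space set \<Rightarrow> ('b \<Rightarrow> 'b) \<Rightarrow> 'b set" where
  "Eq_points Z R = {z \<in> Z. \<forall>\<epsilon>>0. \<exists>\<eta>>0. \<forall>z'\<in>Z. dist z z' < \<eta> \<longrightarrow>
      (\<forall>n::nat. dist ((R^^n) z) ((R^^n) z') < \<epsilon>)}"

end

theory Submission
  imports Defs
begin

lemma iter_in: "T ` X = X \<Longrightarrow> x \<in> X \<Longrightarrow> (T^^n) x \<in> X"
  by (induction n) auto

lemma iter_comm:
  assumes "T ` X = X" "\<forall>x\<in>X. \<pi> (T x) = R (\<pi> x)" "x \<in> X"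
  shows "\<pi> ((T^^n) x) = (R^^n) (\<pi> x)"
  using assms by (induction n) (auto simp: iter_in)

lemma fiber_nbhd:
  fixes \<pi> :: "'a::metric_space \<Rightarrow> 'b::metric_space"
  assumes "compact X" "continuous_on X \<pi>" "open G" "\<pi> -` {z} \<inter> X \<subseteq> G"
  shows "\<exists>r>0. \<forall>x'\<in>X. dist (\<pi> x') z < r \<longrightarrow> x' \<in> G"
proof -
  have "compact (X - G)" using assms by (simp add: Diff_eq compact_Int_closed closed_Compl open_closed)
  hence "compact (\<pi> ` (X - G))"
    using assms(2) by (meson Diff_subset compact_continuous_image continuous_on_subset)
  hence cl: "closed (\<pi> ` (X - G))" by (rule compact_imp_closed)
  have "z \<notin> \<pi> ` (X - G)" using assms(4) by auto
  then obtain r where r: "r > 0" "ball z r \<subseteq> - (\<pi> ` (X - G))"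
    using cl by (metis ComplI open_Compl open_contains_ball)
  show ?thesis
  proof (intro exI[of _ r] conjI ballI impI)
    fix x' assume "x' \<in> X" "dist (\<pi> x') z < r"
    then have "\<pi> x' \<in> ball z r" by (simp add: dist_commute)
    with r(2) \<open>x' \<in> X\<close> show "x' \<in> G" by auto
  qed (use r in auto)
qed


lemma lift_opene:
  fixes \<pi> :: "'a::metric_space \<Rightarrow> 'b::metric_space"
  assumes "compact X" "continuous_on X \<pi>" "\<pi> ` X = Z" "almost_one_to_one \<pi> X" "opene X W"
  shows "\<exists>W'. opene Z W' \<and> (\<forall>x\<in>X. \<pi> x \<in> W' \<longrightarrow> x \<in> W)"
proof -
  obtain G where G: "open G" "W = X \<inter> G" using assms(5) by (auto simp: opene_def openin_open)
  obtain x where x: "x \<in> X" "x \<in> G" using assms(5) G by (auto simp: opene_def)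
  have "x \<in> closure {x \<in> X. \<pi> -` {\<pi> x} \<inter> X = {x}}" using assms(4) x by (auto simp: almost_one_to_one_def)
  then have "G \<inter> {x \<in> X. \<pi> -` {\<pi> x} \<inter> X = {x}} \<noteq> {}"
    using open_Int_closure_eq_empty[OF G(1)] x by blast
  then obtain w where w: "w \<in> X" "w \<in> G" "\<pi> -` {\<pi> w} \<inter> X = {w}" by blast
  obtain r where r: "r > 0" "\<forall>x'\<in>X. dist (\<pi> x') (\<pi> w) < r \<longrightarrow> x' \<in> G"
    using fiber_nbhd[OF assms(1,2) G(1), of "\<pi> w"] w by auto
  show ?thesis
  proof (intro exI[of _ "Z \<inter> ball (\<pi> w) r"] conjI ballI impI)
    show "opene Z (Z \<inter> ball (\<pi> w) r)" unfolding opene_def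
      using assms(3) w r by (auto intro!: openin_open_Int)
  next
    fix x' assume "x' \<in> X" "\<pi> x' \<in> Z \<inter> ball (\<pi> w) r"
    then show "x' \<in> W" using r G by (auto simp: dist_commute)
  qed
qed

lemma part1:
  fixes \<pi> :: "'a::metric_space \<Rightarrow> 'b::metric_space"
  assumes "dynsys X T" "dynsys Z R" "factor_map \<pi> X T Z R"
    "almost_one_to_one \<pi> X" "trans_sensitive Z R"
  shows "trans_sensitive X T"
proof -
  have cX: "compact X" and TX: "T ` X = X" using assms(1) by (auto simp: dynsys_def)
  have pc: "continuous_on X \<pi>" and pZ: "\<pi> ` X = Z" and comm: "\<forall>x\<in>X. \<pi> (T x) = R (\<pi> x)"
    using assms(3) by (auto simp: factor_map_def)
  obtain \<delta> where d: "\<delta> > 0" "trans_sensitive_const Z R \<delta>"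
    using assms(5) by (auto simp: trans_sensitive_def)
  have "uniformly_continuous_on X \<pi>" using compact_uniformly_continuous[OF pc cX] .
  then obtain e where e: "e > 0" "\<forall>x\<in>X. \<forall>x'\<in>X. dist x' x < e \<longrightarrow> dist (\<pi> x') (\<pi> x) < \<delta>"
    unfolding uniformly_continuous_on_def using d(1) by metis
  have "trans_sensitive_const X T (e/2)"
    unfolding trans_sensitive_const_def
  proof (intro allI impI)
    fix U V W assume UVW: "opene X U" "opene X V" "opene X W"
    obtain U' where U': "opene Z U'" "\<forall>x\<in>X. \<pi> x \<in> U' \<longrightarrow> x \<in> U"
      using lift_opene[OF cX pc pZ assms(4) UVW(1)] by blast
    obtain V' where V': "opene Z V'" "\<forall>x\<in>X. \<pi> x \<in> V' \<longrightarrow> x \<in> V"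
      using lift_opene[OF cX pc pZ assms(4) UVW(2)] by blast
    obtain W' where W': "opene Z W'" "\<forall>x\<in>X. \<pi> x \<in> W' \<longrightarrow> x \<in> W"
      using lift_opene[OF cX pc pZ assms(4) UVW(3)] by blast
    obtain n where n: "n \<in> S_T R W' \<delta>" "n \<in> N_T R U' V'"
      using d(2) U'(1) V'(1) W'(1) unfolding trans_sensitive_const_def by blast
    obtain z1 z2 where z: "z1 \<in> W'" "z2 \<in> W'" "dist ((R^^n) z1) ((R^^n) z2) > \<delta>"
      using n(1) by (auto simp: S_T_def)
    obtain z where zz: "z \<in> U'" "(R^^n) z \<in> V'" using n(2) by (auto simp: N_T_def)
    have sub: "U' \<subseteq> Z" "V' \<subseteq> Z" "W' \<subseteq> Z" using U'(1) V'(1) W'(1)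
      by (auto simp: opene_def dest!: openin_imp_subset)
    obtain x1 where x1: "x1 \<in> X" "\<pi> x1 = z1" using pZ z(1) sub by blast
    obtain x2 where x2: "x2 \<in> X" "\<pi> x2 = z2" using pZ z(2) sub by blast
    obtain x where x: "x \<in> X" "\<pi> x = z" using pZ zz(1) sub by blast
    have "x \<in> U" using U'(2) x zz by auto
    moreover have "\<pi> ((T^^n) x) = (R^^n) z" using iter_comm[OF TX comm x(1)] x by simp
    hence "(T^^n) x \<in> V" using V'(2) iter_in[OF TX x(1)] zz by auto
    ultimately have "n \<in> N_T T U V" by (auto simp: N_T_def)
    moreover have "n \<in> S_T T W (e/2)"
    proof -
      have a: "\<pi> ((T^^n) x1) = (R^^n) z1" using iter_comm[OF TX comm x1(1)] x1 by simp
      have b: "\<pi> ((T^^n) x2) = (R^^n) z2" using iter_comm[OF TX comm x2(1)] x2 by simp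
      have "\<not> dist ((T^^n) x1) ((T^^n) x2) < e"
        using e(2) iter_in[OF TX x1(1)] iter_in[OF TX x2(1)] a b z(3)
        by (metis dist_commute less_asym)
      hence "dist ((T^^n) x1) ((T^^n) x2) > e/2" using e(1) by linarith
      moreover have "x1 \<in> W" "x2 \<in> W" using W'(2) x1 x2 z by auto
      ultimately show ?thesis by (auto simp: S_T_def)
    qed
    ultimately show "S_T T W (e/2) \<inter> N_T T U V \<noteq> {}" by blast
  qed
  then show ?thesis using e(1) by (auto simp: trans_sensitive_def intro!: exI[of _ "e/2"])
qed


lemma part2_sens:
  fixes \<pi> :: "'a::metric_space \<Rightarrow> 'b::metric_space"
  assumes "dynsys X T" "dynsys Z R" "factor_map \<pi> X T Z R"
    "z0 \<in> Z" "\<pi> -` {z0} \<inter> X = {x0}" "trans_sensitive X T"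
  shows "sensitive Z R"
proof -
  have cX: "compact X" and TX: "T ` X = X" using assms(1) by (auto simp: dynsys_def)
  have pc: "continuous_on X \<pi>" and pZ: "\<pi> ` X = Z" and comm: "\<forall>x\<in>X. \<pi> (T x) = R (\<pi> x)"
    using assms(3) by (auto simp: factor_map_def)
  obtain \<delta> where d: "\<delta> > 0" "trans_sensitive_const X T \<delta>"
    using assms(6) by (auto simp: trans_sensitive_def)
  obtain r where r: "r > 0" "\<forall>x'\<in>X. dist (\<pi> x') z0 < r \<longrightarrow> x' \<in> ball x0 (\<delta>/2)"
    using fiber_nbhd[OF cX pc, of "ball x0 (\<delta>/2)" z0] assms(5) d(1) by auto
  have x0X: "x0 \<in> X" "\<pi> x0 = z0" using assms(5) by auto
  show ?thesis unfolding sensitive_def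
  proof (intro exI[of _ "r/8"] conjI ballI allI impI)
    show "r/8 > 0" using r by simp
  next
    fix z U assume zZ: "z \<in> Z" and UU: "(\<exists>V. openin (top_of_set Z) V \<and> z \<in> V \<and> V \<subseteq> U) \<and> U \<subseteq> Z"
    then obtain V where V: "openin (top_of_set Z) V" "z \<in> V" "V \<subseteq> U" by blast
    obtain x where x: "x \<in> X" "\<pi> x = z" using pZ zZ by blast
    define Wx where "Wx = (X \<inter> \<pi> -` V) \<inter> ball x (\<delta>/3)"
    define Vx where "Vx = X \<inter> \<pi> -` ball z0 (r/4)"
    have oW: "opene X Wx" unfolding opene_def Wx_def
    proof
      show "openin (top_of_set X) (X \<inter> \<pi> -` V \<inter> ball x (\<delta> / 3))"
      proof -
        have "openin (top_of_set X) (X \<inter> \<pi> -` V)"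
          using continuous_openin_preimage[OF pc _ V(1)] pZ by auto
        then show ?thesis using openin_Int_open[of X "X \<inter> \<pi> -` V" "ball x (\<delta>/3)"] by auto
      qed
      show "X \<inter> \<pi> -` V \<inter> ball x (\<delta> / 3) \<noteq> {}" using x V d(1) by auto
    qed
    have oV: "opene X Vx" unfolding opene_def Vx_def
      using continuous_openin_preimage_gen[OF pc, of "ball z0 (r/4)"] x0X r by auto
    obtain n where n: "n \<in> S_T T Wx \<delta>" "n \<in> N_T T Wx Vx"
      using d(2) oW oV unfolding trans_sensitive_const_def by blast
    obtain x1 x2 where xs: "x1 \<in> Wx" "x2 \<in> Wx" "dist ((T^^n) x1) ((T^^n) x2) > \<delta>"
      using n(1) by (auto simp: S_T_def)
    obtain u where u: "u \<in> Wx" "(T^^n) u \<in> Vx" using n(2) by (auto simp: N_T_def)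
    have n1: "n \<ge> 1"
    proof (rule ccontr)
      assume "\<not> n \<ge> 1" hence "n = 0" by simp
      hence "dist x1 x2 > \<delta>" using xs by simp
      moreover have "dist x1 x2 \<le> dist x1 x + dist x x2" by (rule dist_triangle)
      moreover have "dist x1 x < \<delta>/3" "dist x x2 < \<delta>/3" using xs(1,2) by (auto simp: Wx_def dist_commute)
      ultimately show False using d(1) by linarith
    qed
    have X12: "x1 \<in> X" "x2 \<in> X" "u \<in> X" using xs u by (auto simp: Wx_def)
    have "\<exists>xi\<in>Wx. dist ((R^^n) (\<pi> xi)) z0 \<ge> r"
    proof (rule ccontr)
      assume "\<not> ?thesis"
      hence "dist (\<pi> ((T^^n) x1)) z0 < r" "dist (\<pi> ((T^^n) x2)) z0 < r"
        using xs iter_comm[OF TX comm] X12 by (auto simp: not_le)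
      hence "dist x0 ((T^^n) x1) < \<delta>/2" "dist x0 ((T^^n) x2) < \<delta>/2"
        using r(2) iter_in[OF TX] X12 by auto
      moreover have "dist ((T^^n) x1) ((T^^n) x2) \<le> dist x0 ((T^^n) x1) + dist x0 ((T^^n) x2)"
        by (rule dist_triangle3)
      ultimately show False using xs(3) by linarith
    qed
    then obtain xi where xi: "xi \<in> Wx" "dist ((R^^n) (\<pi> xi)) z0 \<ge> r" by blast
    have yU: "\<pi> xi \<in> U" "\<pi> u \<in> U" using xi(1) u(1) V(3) by (auto simp: Wx_def)
    have uz: "dist ((R^^n) (\<pi> u)) z0 < r/4"
      using u iter_comm[OF TX comm X12(3)] by (auto simp: Vx_def dist_commute)
    show "\<exists>y\<in>U. \<exists>n. 1 \<le> n \<and> r / 8 < dist ((R ^^ n) z) ((R ^^ n) y)"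
    proof (cases "dist ((R^^n) z) z0 < r/2")
      case True
      have "dist ((R^^n) (\<pi> xi)) z0 \<le> dist ((R^^n) z) ((R^^n) (\<pi> xi)) + dist ((R^^n) z) z0"
        by (rule dist_triangle3)
      hence "r/8 < dist ((R^^n) z) ((R^^n) (\<pi> xi))" using True xi(2) r(1) by linarith
      then show ?thesis using yU n1 by blast
    next
      case False
      have "dist ((R^^n) z) z0 \<le> dist ((R^^n) z) ((R^^n) (\<pi> u)) + dist ((R^^n) (\<pi> u)) z0"
        by (rule dist_triangle)
      hence "r/8 < dist ((R^^n) z) ((R^^n) (\<pi> u))" using False uz r(1) by linarith
      then show ?thesis using yU n1 by blast
    qed
  qed
qed

lemma sens_noeq:
  assumes "sensitive Z R" shows "Eq_points Z R = {}"
proof (rule ccontr)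
  assume "Eq_points Z R \<noteq> {}"
  then obtain z where z: "z \<in> Z" "\<forall>\<epsilon>>0. \<exists>\<eta>>0. \<forall>z'\<in>Z. dist z z' < \<eta> \<longrightarrow>
      (\<forall>n::nat. dist ((R^^n) z) ((R^^n) z') < \<epsilon>)" by (auto simp: Eq_points_def)
  obtain \<delta> where d: "\<delta> > 0" "\<forall>z\<in>Z. \<forall>U. (\<exists>V. openin (top_of_set Z) V \<and> z \<in> V \<and> V \<subseteq> U) \<and> U \<subseteq> Z
      \<longrightarrow> (\<exists>y\<in>U. \<exists>n::nat. n \<ge> 1 \<and> dist ((R^^n) z) ((R^^n) y) > \<delta>)"
    using assms by (auto simp: sensitive_def)
  obtain \<eta> where e: "\<eta> > 0" "\<forall>z'\<in>Z. dist z z' < \<eta> \<longrightarrow> (\<forall>n::nat. dist ((R^^n) z) ((R^^n) z') < \<delta>)"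
    using z(2) d(1) by blast
  have "openin (top_of_set Z) (Z \<inter> ball z \<eta>)" by (auto intro: openin_open_Int)
  then obtain y n where "y \<in> Z \<inter> ball z \<eta>" "dist ((R^^n) z) ((R^^n) y) > \<delta>"
    using d(2) z(1) e(1) by (metis Int_iff centre_in_ball inf_le1 order_refl)
  then show False using e(2) by (meson IntD1 IntD2 mem_ball not_less_iff_gr_or_eq)
qed

theorem lemma4p4:
  fixes X :: "'a::metric_space set" and T :: "'a \<Rightarrow> 'a"
    and Z :: "'b::metric_space set" and R :: "'b \<Rightarrow> 'b" and \<pi> :: "'a \<Rightarrow> 'b"
  assumes "dynsys X T" and "dynsys Z R" and "factor_map \<pi> X T Z R"
  shows "(almost_one_to_one \<pi> X \<and> trans_sensitive Z R \<longrightarrow> trans_sensitive X T)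
    \<and> ((\<exists>z\<in>Z. \<exists>x. \<pi> -` {z} \<inter> X = {x}) \<and> trans_sensitive X T
         \<longrightarrow> sensitive Z R \<and> Eq_points Z R = {})"
  using part1[OF assms] part2_sens[OF assms] sens_noeq by blast

end
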